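(* Let $p(\boldsymbol{x},y)$ be a joint density on $\mathcal{X}\times\{+1,-1\}$ with class priors $\pi_+=p(y=+1)\in(0,1)$, $\pi_-=1-\pi_+$. Generate a labeled noisy example as follows: draw two labeled examples $(\boldsymbol{x},y),(\boldsymbol{x}',y')$ independently from $p(\boldsymbol{x},y)$ conditioned on $(y,y')\in\{(+1,+1),(+1,-1),(-1,-1)\}$; independently draw an observed label $\widetilde{y}$ uniformly from $\{+1,-1\}$; if $\widetilde{y}=+1$ output the instance $\boldsymbol{x}$ with true label $y$, and if $\widetilde{y}=-1$ output the instance $\boldsymbol{x}'$ with true label $y'$. Denote the true label of the output by $y$ and define the inverse noise rates $\phi_+=p(y=-1\mid\widetilde{y}=+1)$, $\phi_-=p(y=+1\mid\widetilde{y}=-1)$ and the noise rates $\rho_+=p(\widetilde{y}=-1\mid y=+1)$, $\rho_-=p(\widetilde{y}=+1\mid y=-1)$. Then $$\phi_+=\frac{\pi_-^2}{\pi_+^2+\pi_-^2+\pi_+\pi_-},\quad \rho_+=\frac{\pi_+}{1+\pi_+},\quad \phi_-=\frac{\pi_+^2}{\pi_+^2+\pi_-^2+\pi_+\pi_-},\quad \rho_-=\frac{\pi_-}{1+\pi_-}.$$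
   Context: This formalizes viewing pairwise comparison data $(\boldsymbol{x},\boldsymbol{x}')$ as noisy-label data: the first component of each pair is treated as an observed positive ($\widetilde{y}=+1$) and the second as an observed negative ($\widetilde{y}=-1$), with equally many observed positives and negatives, so $p(\widetilde{y}=+1)=p(\widetilde{y}=-1)=1/2$. *)

theory Defs
  imports "HOL-Probability.Probability"
begin

text \<open>Labels: True encodes +1, False encodes -1.
  A labeled example is an element of 'a \<times> bool, drawn from the probability measure M.\<close>

definition allowed_pair :: "bool \<times> bool \<Rightarrow> bool" where
  "allowed_pair yy \<longleftrightarrow> yy \<in> {(True, True), (True, False), (False, False)}"

definition pair_measure_cond :: "('a \<times> bool) measure \<Rightarrow> (('a \<times> bool) \<times> ('a \<times> bool)) measure" where
  "pair_measure_cond M = uniform_measure (M \<Otimes>\<^sub>M M)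
     {zz \<in> space (M \<Otimes>\<^sub>M M). allowed_pair (snd (fst zz), snd (snd zz))}"

definition gen_joint :: "('a \<times> bool) measure \<Rightarrow> ((('a \<times> bool) \<times> ('a \<times> bool)) \<times> bool) measure" where
  "gen_joint M = pair_measure_cond M \<Otimes>\<^sub>M uniform_count_measure (UNIV :: bool set)"

text \<open>Output: (observed label, output instance with its true label).\<close>
definition gen_output :: "(('a \<times> bool) \<times> ('a \<times> bool)) \<times> bool \<Rightarrow> bool \<times> ('a \<times> bool)" where
  "gen_output w = (snd w, if snd w then fst (fst w) else snd (fst w))"

definition noisy_measure :: "('a \<times> bool) measure \<Rightarrow> (bool \<times> ('a \<times> bool)) measure" where
  "noisy_measure M = distr (gen_joint M) (count_space UNIV \<Otimes>\<^sub>M M) gen_output"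

end

theory Submission
  imports Defs
begin

lemma meas_times:
  assumes "prob_space M" "prob_space N" "A \<in> sets M" "B \<in> sets N"
  shows "measure (M \<Otimes>\<^sub>M N) (A \<times> B) = measure M A * measure N B"
proof -
  interpret N: prob_space N by fact
  have "emeasure (M \<Otimes>\<^sub>M N) (A \<times> B) = emeasure M A * emeasure N B"
    using N.emeasure_pair_measure_Times assms by blast
  thus ?thesis by (simp add: measure_def enn2real_mult)
qed

lemma noisy_m:
  fixes M :: "('a \<times> bool) measure"
  assumes PM: "prob_space M"
    and Pm: "{z \<in> space M. snd z} \<in> sets M"
    and pdef: "p = measure M {z \<in> space M. snd z}"
    and p0: "0 < p" and p1: "p < 1"
  shows "measure (noisy_measure M) {w \<in> space (noisy_measure M). fst w = a \<and> snd (snd w) = b}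
     = (if a then (if b then p else (1-p)^2) else (if b then p^2 else 1 - p)) / (2 * (p + (1-p)^2))"
proof -
  interpret M: prob_space M by fact
  define S where "S = space M"
  define P where "P = {z \<in> S. snd z}"
  define Nn where "Nn = {z \<in> S. \<not> snd z}"
  have P[measurable]: "P \<in> sets M" using Pm S_def P_def by simp
  have Nn_eq: "Nn = S - P" unfolding Nn_def P_def by auto
  have Nn[measurable]: "Nn \<in> sets M" unfolding Nn_eq S_def using P by auto
  have S[measurable]: "S \<in> sets M" by (simp add: S_def)
  have mP: "measure M P = p" using pdef P_def S_def by simp
  have mN: "measure M Nn = 1 - p" unfolding Nn_eq S_def using M.prob_compl[OF P] mP by simp
  have mS: "measure M S = 1" by (simp add: S_def M.prob_space)
  define C where "C = {zz \<in> space (M \<Otimes>\<^sub>M M). allowed_pair (snd (fst zz), snd (snd zz))}"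
  have C_eq: "C = P \<times> S \<union> Nn \<times> Nn"
    unfolding C_def P_def Nn_def S_def allowed_pair_def space_pair_measure by auto
  have C[measurable]: "C \<in> sets (M \<Otimes>\<^sub>M M)" unfolding C_eq by auto
  have PMM: "prob_space (M \<Otimes>\<^sub>M M)" by (simp add: PM prob_space_pair)
  interpret MM: prob_space "M \<Otimes>\<^sub>M M" by fact
  have mC: "measure (M \<Otimes>\<^sub>M M) C = p + (1-p)^2"
  proof -
    have "measure (M \<Otimes>\<^sub>M M) C = measure (M \<Otimes>\<^sub>M M) (P \<times> S) + measure (M \<Otimes>\<^sub>M M) (Nn \<times> Nn)"
      unfolding C_eq by (rule MM.finite_measure_Union) (auto simp: Nn_eq)
    also have "\<dots> = p + (1-p)^2"
      by (simp add: meas_times PM mP mN mS power2_eq_square)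
    finally show ?thesis .
  qed
  have Zpos: "0 < p + (1-p)^2" using p0 by (simp add: add_pos_nonneg)
  have eC0: "emeasure (M \<Otimes>\<^sub>M M) C \<noteq> 0" using mC Zpos MM.emeasure_eq_measure by auto
  have eCinf: "emeasure (M \<Otimes>\<^sub>M M) C \<noteq> \<infinity>" by simp
  have PC: "prob_space (pair_measure_cond M)"
    unfolding pair_measure_cond_def C_def[symmetric]
    by (rule prob_space_uniform_measure[OF eC0 eCinf])
  define E where "E = {zz \<in> space (M \<Otimes>\<^sub>M M). snd (if a then fst zz else snd zz) = b}"
  have E[measurable]: "E \<in> sets (M \<Otimes>\<^sub>M M)"
  proof -
    have "E = (if a then (if b then P \<times> S else Nn \<times> S) else (if b then S \<times> P else S \<times> Nn))"
      unfolding E_def P_def Nn_def S_def space_pair_measure by auto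
    thus ?thesis by auto
  qed
  have CE: "C \<inter> E = (if a then (if b then P \<times> S else Nn \<times> Nn) else (if b then P \<times> P else S \<times> Nn))"
    unfolding C_eq E_def P_def Nn_def S_def space_pair_measure by auto
  have mCE: "measure (M \<Otimes>\<^sub>M M) (C \<inter> E) = (if a then (if b then p else (1-p)^2) else (if b then p^2 else 1 - p))"
    unfolding CE by (simp add: meas_times PM mP mN mS power2_eq_square)
  have mE: "measure (pair_measure_cond M) E = (if a then (if b then p else (1-p)^2) else (if b then p^2 else 1 - p)) / (p + (1-p)^2)"
    unfolding pair_measure_cond_def C_def[symmetric]
    using measure_uniform_measure[OF eC0 eCinf E] mCE mC by simp
  have UC: "prob_space (uniform_count_measure (UNIV :: bool set))"
    by (rule prob_space_uniform_count_measure) auto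
  have mU: "measure (uniform_count_measure (UNIV :: bool set)) {a} = 1/2"
    by (simp add: measure_uniform_count_measure)
  have go[measurable]: "gen_output \<in> measurable (gen_joint M) (count_space UNIV \<Otimes>\<^sub>M M)"
    unfolding gen_joint_def gen_output_def pair_measure_cond_def
    by measurable
  define X where "X = {w \<in> space (count_space UNIV \<Otimes>\<^sub>M M). fst w = a \<and> snd (snd w) = b}"
  have X[measurable]: "X \<in> sets (count_space UNIV \<Otimes>\<^sub>M M)"
  proof -
    have "X = {a} \<times> (if b then P else Nn)"
      unfolding X_def P_def Nn_def S_def space_pair_measure by auto
    thus ?thesis by auto
  qed
  have pre: "gen_output -` X \<inter> space (gen_joint M) = E \<times> {a}"
    unfolding X_def E_def gen_joint_def gen_output_def pair_measure_cond_def
    by (auto simp: space_pair_measure space_uniform_count_measure)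
  have "measure (noisy_measure M) {w \<in> space (noisy_measure M). fst w = a \<and> snd (snd w) = b}
      = measure (noisy_measure M) X"
    unfolding X_def noisy_measure_def by simp
  also have "\<dots> = measure (gen_joint M) (gen_output -` X \<inter> space (gen_joint M))"
    unfolding noisy_measure_def by (rule measure_distr[OF go X])
  also have "\<dots> = measure (pair_measure_cond M) E * (1/2)"
    unfolding pre unfolding gen_joint_def
    by (subst meas_times[OF PC UC]) (auto simp: pair_measure_cond_def mU sets_uniform_count_measure)
  finally show ?thesis using mE by simp
qed

lemma noisy_prob:
  fixes M :: "('a \<times> bool) measure"
  assumes PM: "prob_space M"
    and Pm: "{z \<in> space M. snd z} \<in> sets M"
    and pdef: "p = measure M {z \<in> space M. snd z}"
    and p0: "0 < p" and p1: "p < 1"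
  shows "prob_space (noisy_measure M)"
proof -
  interpret M: prob_space M by fact
  define C where "C = {zz \<in> space (M \<Otimes>\<^sub>M M). allowed_pair (snd (fst zz), snd (snd zz))}"
  have "C \<supseteq> {z \<in> space M. snd z} \<times> space M"
    unfolding C_def allowed_pair_def space_pair_measure by auto
  moreover have C: "C \<in> sets (M \<Otimes>\<^sub>M M)"
  proof -
    have Nm: "space M - {z \<in> space M. snd z} \<in> sets M" using Pm by auto
    have "C = {z \<in> space M. snd z} \<times> space M \<union> (space M - {z \<in> space M. snd z}) \<times> (space M - {z \<in> space M. snd z})"
      unfolding C_def allowed_pair_def space_pair_measure by auto
    then show ?thesis using Pm Nm by auto
  qed
  ultimately have "emeasure (M \<Otimes>\<^sub>M M) C \<ge> emeasure (M \<Otimes>\<^sub>M M) ({z \<in> space M. snd z} \<times> space M)"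
    by (intro emeasure_mono) auto
  moreover have "emeasure (M \<Otimes>\<^sub>M M) ({z \<in> space M. snd z} \<times> space M) = ennreal p"
    using M.emeasure_pair_measure_Times[OF Pm, of "space M"] pdef
    by (simp add: M.emeasure_eq_measure M.prob_space)
  ultimately have eC0: "emeasure (M \<Otimes>\<^sub>M M) C \<noteq> 0" using p0
    by (metis ennreal_eq_0_iff leD le_zero_eq not_le)
  interpret MM: prob_space "M \<Otimes>\<^sub>M M" by (simp add: PM prob_space_pair)
  have PC: "prob_space (pair_measure_cond M)"
    unfolding pair_measure_cond_def C_def[symmetric]
    by (rule prob_space_uniform_measure[OF eC0]) simp
  have UC: "prob_space (uniform_count_measure (UNIV :: bool set))"
    by (rule prob_space_uniform_count_measure) auto
  have go: "gen_output \<in> measurable (gen_joint M) (count_space UNIV \<Otimes>\<^sub>M M)"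
    unfolding gen_joint_def gen_output_def pair_measure_cond_def
    by measurable
  have "prob_space (gen_joint M)" unfolding gen_joint_def
    using PC UC by (simp add: prob_space_pair)
  then show ?thesis unfolding noisy_measure_def
    using go by (rule prob_space.prob_space_distr)
qed

theorem theorem5:
  fixes M :: "('a \<times> bool) measure" and \<pi>p \<pi>n :: real
  assumes "prob_space M"
    and "{z \<in> space M. snd z} \<in> sets M"
    and "\<pi>p = measure M {z \<in> space M. snd z}"
    and "0 < \<pi>p" and "\<pi>p < 1"
    and "\<pi>n = 1 - \<pi>p"
  shows "\<P>(w in noisy_measure M. \<not> snd (snd w) \<bar> fst w) = \<pi>n^2 / (\<pi>p^2 + \<pi>n^2 + \<pi>p * \<pi>n) \<and>
         \<P>(w in noisy_measure M. \<not> fst w \<bar> snd (snd w)) = \<pi>p / (1 + \<pi>p) \<and>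
         \<P>(w in noisy_measure M. snd (snd w) \<bar> \<not> fst w) = \<pi>p^2 / (\<pi>p^2 + \<pi>n^2 + \<pi>p * \<pi>n) \<and>
         \<P>(w in noisy_measure M. fst w \<bar> \<not> snd (snd w)) = \<pi>n / (1 + \<pi>n)"
proof -
  let ?N = "noisy_measure M"
  interpret N: prob_space ?N using noisy_prob[OF assms(1-5)] .
  define Z where "Z = 2 * (\<pi>p + (1-\<pi>p)^2)"
  define m where "m a b = measure ?N {w \<in> space ?N. fst w = a \<and> snd (snd w) = b}" for a b
  have mv: "m a b = (if a then (if b then \<pi>p else (1-\<pi>p)^2) else (if b then \<pi>p^2 else 1 - \<pi>p)) / Z" for a b
    unfolding m_def Z_def by (rule noisy_m[OF assms(1-5)])
  have ev: "{w \<in> space ?N. fst w = a \<and> snd (snd w) = b} \<in> sets ?N" for a b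
  proof -
    have "{w \<in> space ?N. fst w = a \<and> snd (snd w) = b} = {a} \<times> {z \<in> space M. snd z = b}"
      by (auto simp: noisy_measure_def space_pair_measure)
    moreover have "{z \<in> space M. snd z = b} \<in> sets M"
    proof (cases b)
      case True then show ?thesis using assms(2) by simp
    next
      case False
      have "{z \<in> space M. snd z = b} = space M - {z \<in> space M. snd z}" using False by auto
      then show ?thesis using assms(2) by auto
    qed
    ultimately show ?thesis by (simp add: noisy_measure_def)
  qed
  have fstv: "\<P>(w in ?N. fst w = a) = m a True + m a False" for a
  proof -
    have "{w \<in> space ?N. fst w = a} = {w \<in> space ?N. fst w = a \<and> snd (snd w) = True} \<union> {w \<in> space ?N. fst w = a \<and> snd (snd w) = False}"
      by auto
    then show ?thesis unfolding m_def
      by (simp only:) (rule N.finite_measure_Union[OF ev ev], auto)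
  qed
  have sndv: "\<P>(w in ?N. snd (snd w) = b) = m True b + m False b" for b
  proof -
    have "{w \<in> space ?N. snd (snd w) = b} = {w \<in> space ?N. fst w = True \<and> snd (snd w) = b} \<union> {w \<in> space ?N. fst w = False \<and> snd (snd w) = b}"
      by auto
    then show ?thesis unfolding m_def
      by (simp only:) (rule N.finite_measure_Union[OF ev ev], auto)
  qed
  have c1: "\<P>(w in ?N. \<not> snd (snd w) \<bar> fst w) = m True False / (m True True + m True False)"
    unfolding cond_prob_def using fstv[of True] by (simp add: m_def conj_commute)
  have c2: "\<P>(w in ?N. \<not> fst w \<bar> snd (snd w)) = m False True / (m True True + m False True)"
    unfolding cond_prob_def using sndv[of True] by (simp add: m_def conj_commute)
  have c3: "\<P>(w in ?N. snd (snd w) \<bar> \<not> fst w) = m False True / (m False True + m False False)"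
    unfolding cond_prob_def using fstv[of False] by (simp add: m_def conj_commute)
  have c4: "\<P>(w in ?N. fst w \<bar> \<not> snd (snd w)) = m True False / (m True False + m False False)"
    unfolding cond_prob_def using sndv[of False] by (simp add: m_def conj_commute)
  have Zp: "Z > 0" unfolding Z_def using assms(4) by (simp add: add_pos_nonneg)
  have Zeq: "\<pi>p^2 + \<pi>n^2 + \<pi>p * \<pi>n = \<pi>p + (1-\<pi>p)^2" unfolding assms(6) by (simp add: power2_eq_square algebra_simps)
  have dz: "(a/Z)/(b/Z + c/Z) = a/(b+c)" for a b c
    using Zp by (simp add: add_divide_distrib[symmetric])
  have p0: "0 < \<pi>p" and p1: "\<pi>p < 1" using assms(4,5) .
  have q1: "(1-\<pi>p)^2 / (\<pi>p + (1-\<pi>p)^2) = \<pi>n^2 / (\<pi>p^2 + \<pi>n^2 + \<pi>p * \<pi>n)"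
    using Zeq assms(6) by simp
  have q2: "\<pi>p^2 / (\<pi>p + \<pi>p^2) = \<pi>p / (1 + \<pi>p)"
  proof -
    have "\<pi>p^2 / (\<pi>p + \<pi>p^2) = (\<pi>p * \<pi>p) / (\<pi>p * (1 + \<pi>p))"
      by (simp add: power2_eq_square algebra_simps)
    also have "\<dots> = \<pi>p / (1 + \<pi>p)" using p0 by simp
    finally show ?thesis .
  qed
  have q3: "\<pi>p^2 / (\<pi>p^2 + (1 - \<pi>p)) = \<pi>p^2 / (\<pi>p^2 + \<pi>n^2 + \<pi>p * \<pi>n)"
    unfolding assms(6) by (simp add: power2_eq_square algebra_simps)
  have q4: "(1-\<pi>p)^2 / ((1-\<pi>p)^2 + (1 - \<pi>p)) = \<pi>n / (1 + \<pi>n)"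
  proof -
    have n0: "0 < 1 - \<pi>p" using p1 by simp
    have "(1-\<pi>p)^2 / ((1-\<pi>p)^2 + (1 - \<pi>p)) = ((1-\<pi>p) * (1-\<pi>p)) / ((1-\<pi>p) * (1 + (1-\<pi>p)))"
      by (simp add: power2_eq_square algebra_simps)
    also have "\<dots> = (1-\<pi>p) / (1 + (1-\<pi>p))" using n0 by simp
    finally show ?thesis using assms(6) by simp
  qed
  show ?thesis
    unfolding c1 c2 c3 c4 mv dz using q1 q2 q3 q4 by simp
qed

end
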